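(* Let $1\le p\le n$, $\beta>0$, and $X\in\mathbb{R}^{n\times p}_*$. Let $\mathrm{St}_{X^\top X}=\{Y\in\mathbb{R}^{n\times p}\mid Y^\top Y=X^\top X\}$, whose tangent space at $X$ is $\mathrm{T}_X\mathrm{St}_{X^\top X}=\{\xi\in\mathbb{R}^{n\times p}\mid \xi^\top X+X^\top\xi=0\}$. Define the normal space of $\mathrm{St}_{X^\top X}$ at $X$ with respect to $g^\beta$ as \[\mathrm{N}^\beta_X\mathrm{St}_{X^\top X}=\{U\in\mathbb{R}^{n\times p}\mid g^\beta_X(U,\xi)=0\text{ for all }\xi\in\mathrm{T}_X\mathrm{St}_{X^\top X}\}.\] Then \[\mathrm{N}^\beta_X\mathrm{St}_{X^\top X}=\{X(X^\top X)^{-1}S\mid S\in\mathrm{Sym}(p)\}.\]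
   Context: $\mathbb{R}^{n\times p}_*$ denotes the set of full-rank (rank $p$) real $n\times p$ matrices; $\mathrm{Sym}(p)$ is the set of real symmetric $p\times p$ matrices. For $\beta>0$ and $X\in\mathbb{R}^{n\times p}_*$, the $\beta$-metric is the inner product on $\mathbb{R}^{n\times p}$ given by \[g^\beta_X(\xi,\zeta)=\mathrm{trace}\Big(\xi^\top\big(\mathrm{I}_n-(1-\beta)X(X^\top X)^{-1}X^\top\big)\zeta\,(X^\top X)^{-1}\Big),\qquad \xi,\zeta\in\mathbb{R}^{n\times p}.\] *)

theory Defs
  imports "HOL-Analysis.Analysis"
begin

text \<open>Matrices in R^(n x p) are represented as real^'p^'n (rows indexed by 'n, columns by 'p).\<close>

definition beta_metric :: "real \<Rightarrow> real^'p^'n \<Rightarrow> real^'p^'n \<Rightarrow> real^'p^'n \<Rightarrow> real" where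
  "beta_metric \<beta> X \<xi> \<zeta> =
     trace (transpose \<xi> ** (mat 1 - (1 - \<beta>) *\<^sub>R (X ** matrix_inv (transpose X ** X) ** transpose X))
            ** \<zeta> ** matrix_inv (transpose X ** X))"

definition tangent_St :: "real^'p^'n \<Rightarrow> (real^'p^'n) set" where
  "tangent_St X = {\<xi>. transpose \<xi> ** X + transpose X ** \<xi> = 0}"

definition normal_St :: "real \<Rightarrow> real^'p^'n \<Rightarrow> (real^'p^'n) set" where
  "normal_St \<beta> X = {U. \<forall>\<xi>\<in>tangent_St X. beta_metric \<beta> X U \<xi> = 0}"

definition Sym :: "(real^'p^'p) set" where
  "Sym = {S. transpose S = S}"

end

theory Submission
  imports Defs
begin

lemma mm_sub_ldistrib: "(A::real^'n^'m) ** (B - C) = A ** B - A ** C"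
  by (simp add: matrix_matrix_mult_def vec_eq_iff sum_subtractf algebra_simps)
lemma mm_sub_rdistrib: "((A::real^'n^'m) - B) ** C = A ** C - B ** C"
  by (simp add: matrix_matrix_mult_def vec_eq_iff sum_subtractf algebra_simps)
lemma mm_add_rdistrib: "((A::real^'n^'m) + B) ** C = A ** C + B ** C"
  by (simp add: matrix_matrix_mult_def vec_eq_iff sum.distrib algebra_simps)
lemma mm_scaleR_left: "((k::real) *\<^sub>R (A::real^'n^'m)) ** B = k *\<^sub>R (A ** B)"
  by (simp add: matrix_matrix_mult_def vec_eq_iff sum_distrib_left algebra_simps)
lemma mm_scaleR_right: "(A::real^'n^'m) ** ((k::real) *\<^sub>R B) = k *\<^sub>R (A ** B)"
  by (simp add: matrix_matrix_mult_def vec_eq_iff sum_distrib_left algebra_simps)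
lemma transpose_sub: "transpose ((A::real^'n^'m) - B) = transpose A - transpose B"
  by (simp add: transpose_def vec_eq_iff)
lemma transpose_add: "transpose ((A::real^'n^'m) + B) = transpose A + transpose B"
  by (simp add: transpose_def vec_eq_iff)
lemma transpose_zero: "transpose (0::real^'n^'m) = 0"
  by (simp add: transpose_def vec_eq_iff)
lemma transpose_uminus: "transpose (- (A::real^'n^'m)) = - transpose A"
  by (simp add: transpose_def vec_eq_iff)
lemma trace_transpose: "trace (transpose (A::real^'n^'n)) = trace A"
  by (simp add: trace_def transpose_def)
lemma trace_scaleR: "trace ((k::real) *\<^sub>R (A::real^'n^'n)) = k * trace A"
  by (simp add: trace_def sum_distrib_left)
lemma trace_uminus: "trace (- (A::real^'n^'n)) = - trace A"
  by (simp add: trace_def sum_negf)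
lemma mm_uminus_left: "(- (A::real^'n^'m)) ** B = - (A ** B)"
  by (simp add: matrix_matrix_mult_def vec_eq_iff sum_negf)
lemma mm_uminus_right: "(A::real^'n^'m) ** (- B) = - (A ** B)"
  by (simp add: matrix_matrix_mult_def vec_eq_iff sum_negf)

lemma frob_zero:
  fixes Z :: "real^'p^'n"
  assumes "trace (transpose Z ** Z) = 0"
  shows "Z = 0"
proof -
  have e: "trace (transpose Z ** Z) = (\<Sum>i\<in>UNIV. \<Sum>k\<in>UNIV. (Z$k$i)^2)"
    by (simp add: trace_def matrix_matrix_mult_def transpose_def power2_eq_square)
  have "\<forall>i\<in>UNIV. (\<Sum>k\<in>UNIV. (Z$k$i)^2) = 0"
    using assms e by (subst sum_nonneg_eq_0_iff[symmetric]) (auto intro: sum_nonneg)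
  then have "\<forall>i k. (Z$k$i)^2 = 0"
    by (simp add: sum_nonneg_eq_0_iff)
  then show ?thesis by (simp add: vec_eq_iff)
qed

lemma matrix_inv_props:
  fixes A :: "real^'n^'n"
  assumes "invertible A"
  shows "A ** matrix_inv A = mat 1" "matrix_inv A ** A = mat 1"
proof -
  have "\<exists>A'. A ** A' = mat 1 \<and> A' ** A = mat 1" using assms invertible_def by blast
  then have "A ** matrix_inv A = mat 1 \<and> matrix_inv A ** A = mat 1"
    unfolding matrix_inv_def by (rule someI_ex)
  then show "A ** matrix_inv A = mat 1" "matrix_inv A ** A = mat 1" by auto
qed

lemma gram_invertible:
  fixes X :: "real^'p^'n"
  assumes "rank X = CARD('p)"
  shows "invertible (transpose X ** X)"
proof -
  have inj: "inj ((*v) X)" using assms full_rank_injective by blast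
  have "\<forall>x. (transpose X ** X) *v x = 0 \<longrightarrow> x = 0"
  proof (intro allI impI)
    fix x assume h: "(transpose X ** X) *v x = 0"
    have "inner x ((transpose X) *v (X *v x)) = 0"
      using h by (simp add: matrix_vector_mul_assoc)
    then have "inner (X *v x) (X *v x) = 0"
      by (metis dot_lmul_matrix vector_transpose_matrix)
    then have "X *v x = 0" by simp
    then show "x = 0" using inj by (metis inj_eq matrix_vector_mult_0_right)
  qed
  then show ?thesis
    using matrix_left_invertible_ker invertible_left_inverse by blast
qed


lemma metric_frob:
  fixes X U \<xi> :: "real^'p^'n" and \<beta> :: real
  defines "Gi \<equiv> matrix_inv (transpose X ** X)"
  defines "M \<equiv> mat 1 - (1 - \<beta>) *\<^sub>R (X ** Gi ** transpose X)"
  assumes GiT: "transpose Gi = Gi"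
  shows "beta_metric \<beta> X U \<xi> = trace (transpose (M ** U ** Gi) ** \<xi>)"
proof -
  have MT: "transpose M = M"
    unfolding M_def by (simp add: transpose_sub transpose_scalar matrix_transpose_mul GiT matrix_mul_assoc)
  have "beta_metric \<beta> X U \<xi> = trace ((transpose U ** M ** \<xi>) ** Gi)"
    unfolding beta_metric_def M_def Gi_def ..
  also have "\<dots> = trace (Gi ** (transpose U ** M ** \<xi>))" by (rule trace_mul_sym)
  also have "\<dots> = trace (transpose (M ** U ** Gi) ** \<xi>)"
    by (simp add: matrix_transpose_mul MT GiT matrix_mul_assoc)
  finally show ?thesis .
qed

theorem proposition3:
  fixes X :: "real^'p^'n" and \<beta> :: real
  assumes "CARD('p) \<le> CARD('n)"
    and "\<beta> > 0"
    and "rank X = CARD('p)"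
  shows "normal_St \<beta> X = {X ** matrix_inv (transpose X ** X) ** S | S. S \<in> Sym}"
proof -
  define Gi where "Gi = matrix_inv (transpose X ** X)"
  define M where "M = mat 1 - (1 - \<beta>) *\<^sub>R (X ** Gi ** transpose X)"
  have inv: "invertible (transpose X ** X)" using assms(3) by (rule gram_invertible)
  have GGi: "transpose X ** X ** Gi = mat 1" and GiG: "Gi ** (transpose X ** X) = mat 1"
    using matrix_inv_props[OF inv] unfolding Gi_def by auto
  have GGi': "Z ** transpose X ** X ** Gi = Z" for Z :: "real^'p^'q"
  proof -
    have "Z ** transpose X ** X ** Gi = Z ** (transpose X ** X ** Gi)" by (simp only: matrix_mul_assoc)
    then show ?thesis by (simp add: GGi)
  qed
  have GiG': "Z ** Gi ** transpose X ** X = Z" for Z :: "real^'p^'q"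
  proof -
    have "Z ** Gi ** transpose X ** X = Z ** (Gi ** (transpose X ** X))" by (simp only: matrix_mul_assoc)
    then show ?thesis by (simp add: GiG)
  qed
  have GiT: "transpose Gi = Gi"
  proof -
    have "transpose Gi ** (transpose X ** X) = transpose (transpose X ** X ** Gi)"
      by (simp add: matrix_transpose_mul)
    then have "transpose Gi ** (transpose X ** X) = mat 1" by (simp add: GGi)
    have "transpose Gi = transpose Gi ** (transpose X ** X ** Gi)"
      by (simp add: GGi)
    also have "\<dots> = transpose Gi ** (transpose X ** X) ** Gi" by (simp only: matrix_mul_assoc)
    also have "\<dots> = Gi" using \<open>transpose Gi ** (transpose X ** X) = mat 1\<close> by simp
    finally show ?thesis .
  qed
  have metric: "beta_metric \<beta> X U \<xi> = trace (transpose (M ** U ** Gi) ** \<xi>)" for U \<xi>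
    unfolding M_def Gi_def by (rule metric_frob) (simp add: GiT[unfolded Gi_def])
  have tang: "\<xi> \<in> tangent_St X" if "transpose (transpose X ** \<xi>) = - (transpose X ** \<xi>)" for \<xi>
    using that unfolding tangent_St_def by (simp add: matrix_transpose_mul)
  have tangD: "transpose (transpose X ** \<xi>) = - (transpose X ** \<xi>)" if "\<xi> \<in> tangent_St X" for \<xi>
    using that unfolding tangent_St_def by (simp add: matrix_transpose_mul eq_neg_iff_add_eq_0)
  show ?thesis
  proof (intro set_eqI iffI)
    fix U assume "U \<in> {X ** matrix_inv (transpose X ** X) ** S | S. S \<in> Sym}"
    then obtain S where U: "U = X ** Gi ** S" and ST: "transpose S = S"
      unfolding Sym_def Gi_def by auto
    show "U \<in> normal_St \<beta> X"
      unfolding normal_St_def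
    proof (intro CollectI ballI)
      fix \<xi> assume "\<xi> \<in> tangent_St X"
      define A where "A = transpose X ** \<xi>"
      have AT: "transpose A = - A" using tangD[OF \<open>\<xi> \<in> tangent_St X\<close>] unfolding A_def .
      have "M ** U ** Gi = \<beta> *\<^sub>R (X ** Gi ** S ** Gi)"
      proof -
        have MX: "M ** X = \<beta> *\<^sub>R X"
          unfolding M_def by (simp add: mm_sub_rdistrib mm_scaleR_left matrix_mul_assoc GiG' scaleR_diff_left)
        show ?thesis unfolding U by (simp add: matrix_mul_assoc MX mm_scaleR_left)
      qed
      then have "beta_metric \<beta> X U \<xi> = \<beta> * trace (Gi ** S ** Gi ** A)"
        unfolding metric A_def by (simp add: mm_scaleR_left transpose_scalar matrix_transpose_mul GiT ST matrix_mul_assoc trace_scaleR)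
      also have "trace (Gi ** S ** Gi ** A) = 0"
      proof -
        have "trace (Gi ** S ** Gi ** A) = trace (transpose (Gi ** S ** Gi ** A))"
          by (simp add: trace_transpose)
        also have "\<dots> = - trace (A ** (Gi ** S ** Gi))"
          by (simp add: matrix_transpose_mul AT GiT ST mm_uminus_left trace_uminus matrix_mul_assoc)
        also have "\<dots> = - trace (Gi ** S ** Gi ** A)"
          by (subst trace_mul_sym) (rule refl)
        finally show ?thesis by simp
      qed
      finally show "beta_metric \<beta> X U \<xi> = 0" by simp
    qed
  next
    fix U assume "U \<in> normal_St \<beta> X"
    then have N: "trace (transpose (M ** U ** Gi) ** \<xi>) = 0" if "\<xi> \<in> tangent_St X" for \<xi>
      using that unfolding normal_St_def metric by auto
    define B where "B = M ** U ** Gi"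
    define P where "P = X ** Gi ** transpose X"
    have PT: "transpose P = P" unfolding P_def by (simp add: matrix_transpose_mul GiT matrix_mul_assoc)
    have XP: "transpose X ** P = transpose X" unfolding P_def by (simp add: matrix_mul_assoc GGi)
    have PX: "P ** X = X" unfolding P_def by (simp add: matrix_mul_assoc GiG')
    have PP: "P ** P = P" unfolding P_def by (simp add: matrix_mul_assoc GiG')
    define Q where "Q = mat 1 - P"
    have QT: "transpose Q = Q" unfolding Q_def by (simp add: transpose_sub PT)
    have QQ: "Q ** Q = Q" unfolding Q_def by (simp add: mm_sub_rdistrib mm_sub_ldistrib PP)
    have XQ: "transpose X ** Q = 0" unfolding Q_def by (simp add: mm_sub_ldistrib XP)
    have QX: "Q ** X = 0" unfolding Q_def by (simp add: mm_sub_rdistrib PX)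
    have "Q ** B \<in> tangent_St X"
      by (rule tang) (simp add: matrix_mul_assoc XQ transpose_zero)
    then have "trace (transpose B ** (Q ** B)) = 0" using N unfolding B_def by blast
    moreover have "transpose (Q ** B) ** (Q ** B) = transpose B ** (Q ** B)"
    proof -
      have "transpose (Q ** B) ** (Q ** B) = transpose B ** (transpose Q ** Q) ** B"
        by (simp only: matrix_transpose_mul matrix_mul_assoc)
      also have "\<dots> = transpose B ** (Q ** B)" by (simp only: QT QQ matrix_mul_assoc)
      finally show ?thesis .
    qed
    ultimately have "trace (transpose (Q ** B) ** (Q ** B)) = 0" by simp
    then have QB: "Q ** B = 0" by (rule frob_zero)
    define C where "C = Gi ** transpose X ** B"
    have BXC: "B = X ** C"
    proof -
      have "B = P ** B" using QB unfolding Q_def by (simp add: mm_sub_rdistrib)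
      then show ?thesis unfolding P_def C_def by (simp add: matrix_mul_assoc)
    qed
    define \<Omega> where "\<Omega> = C - transpose C"
    have OT: "transpose \<Omega> = - \<Omega>" unfolding \<Omega>_def by (simp add: transpose_sub)
    have "X ** Gi ** \<Omega> \<in> tangent_St X"
      by (rule tang) (simp add: matrix_mul_assoc GGi OT)
    then have "trace (transpose B ** (X ** Gi ** \<Omega>)) = 0" using N unfolding B_def by blast
    then have t1: "trace (transpose C ** \<Omega>) = 0"
      unfolding BXC by (simp add: matrix_transpose_mul matrix_mul_assoc GGi')
    have "trace (transpose \<Omega> ** \<Omega>) = trace (transpose C ** \<Omega>) - trace (C ** \<Omega>)"
      unfolding \<Omega>_def by (simp add: transpose_sub mm_sub_rdistrib trace_sub)
    also have "trace (C ** \<Omega>) = - trace (transpose C ** \<Omega>)"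
    proof -
      have "trace (C ** \<Omega>) = trace (transpose (C ** \<Omega>))" by (simp add: trace_transpose)
      also have "\<dots> = - trace (\<Omega> ** transpose C)"
        by (simp add: matrix_transpose_mul OT mm_uminus_left trace_uminus)
      also have "\<dots> = - trace (transpose C ** \<Omega>)" by (subst trace_mul_sym) (rule refl)
      finally show ?thesis .
    qed
    finally have "trace (transpose \<Omega> ** \<Omega>) = 0" using t1 by simp
    then have "\<Omega> = 0" by (rule frob_zero)
    then have CT: "transpose C = C" unfolding \<Omega>_def by simp
    have MU: "M ** U = X ** C ** (transpose X ** X)"
    proof -
      have "M ** U = B ** (transpose X ** X)" unfolding B_def by (simp add: matrix_mul_assoc GiG')
      then show ?thesis unfolding BXC .
    qed
    have QM: "Q ** M = Q"
      unfolding Q_def M_def P_def[symmetric] by (simp add: mm_sub_rdistrib mm_sub_ldistrib mm_scaleR_right PP)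
    have PM: "P ** M = \<beta> *\<^sub>R P"
      unfolding M_def P_def[symmetric] by (simp add: mm_sub_ldistrib mm_scaleR_right PP scaleR_diff_left)
    have QU: "Q ** U = 0"
      using arg_cong[OF MU, of "\<lambda>Z. Q ** Z"] by (simp add: matrix_mul_assoc QM QX)
    have PU: "\<beta> *\<^sub>R (P ** U) = X ** C ** (transpose X ** X)"
      using arg_cong[OF MU, of "\<lambda>Z. P ** Z"] by (simp add: matrix_mul_assoc PM PX mm_scaleR_left)
    have UPU: "U = P ** U" using QU unfolding Q_def by (simp add: mm_sub_rdistrib)
    define S where "S = (1 / \<beta>) *\<^sub>R (transpose X ** X ** C ** (transpose X ** X))"
    have "transpose S = S"
      unfolding S_def by (simp add: transpose_scalar matrix_transpose_mul CT matrix_mul_assoc)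
    moreover have "U = X ** Gi ** S"
    proof -
      have "X ** Gi ** S = (1 / \<beta>) *\<^sub>R (X ** C ** (transpose X ** X))"
        unfolding S_def by (simp add: mm_scaleR_right matrix_mul_assoc GiG')
      also have "\<dots> = P ** U"
      proof -
        have "(1 / \<beta>) *\<^sub>R (\<beta> *\<^sub>R (P ** U)) = P ** U" using assms(2) by simp
        then show ?thesis unfolding PU .
      qed
      finally show ?thesis using UPU by simp
    qed
    ultimately show "U \<in> {X ** matrix_inv (transpose X ** X) ** S | S. S \<in> Sym}"
      unfolding Sym_def Gi_def by blast
  qed
qed

end
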